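(* Let $f\colon X\to Y$ be a morphism in $G\mathbf{BornCoarse}$. Assume that $f$ is a weak coarse equivalence and that there exists an entourage $U$ of $Y$ such that for every $y\in Y$ there is $x\in X$ with $f(x)\in U[\{y\}]$, $G_x\subseteq G_y$ and $|G_y/G_x|<\infty$, where $G_x,G_y$ denote stabilizers. Then $\mathrm{LF}(f)$ is almost surjective.
   Context: $G\mathbf{BornCoarse}$: $G$-sets with $G$-coarse structure (entourages; invariant ones cofinal) and compatible $G$-bornology; morphisms equivariant, controlled, proper. $f$ is a weak coarse equivalence if, after forgetting the $G$-action, there is a controlled proper $g\colon Y\to X$ with $f g$, $g f$ close to the identities (two maps $f_0,f_1$ are close if $(f_0\times f_1)(\mathrm{diag})$ is an entourage). $\mathrm{LF}(X)$ is the set of $G$-invariant subsets $L$ with $|L\cap B|<\infty$ for every bounded $B$. A multivalued map $s\colon L\to H$ is a subset $s\subseteq L\times H$ projecting surjectively onto $L$; it is surjective if it projects surjectively onto $H$; setting $L_h=\{\ell:(\ell,h)\in s\}$, $\tilde L=\bigsqcup_{h\in H}L_h$ with natural maps $q\colon\tilde L\to L$ and $\tilde s\colon \tilde L\to H$, $s$ is proper if $q$ and $\tilde s$ have finite fibres, and equivariant if $s$ is $G$-invariant. $L\in\mathrm{LF}(X)$ is an $f$-shadow of $H\in\mathrm{LF}(Y)$ if there is a proper surjective equivariant multivalued map $s\colon L\to H$ with $(f\times\mathrm{id}_Y)(s)$ an entourage of $Y$. $\mathrm{LF}(f)$ is almost surjective if every $H\in\mathrm{LF}(Y)$ admits an $f$-shadow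 in $\mathrm{LF}(X)$. *)

theory Defs
  imports "HOL-Algebra.Group_Action" "HOL-Algebra.Coset"
begin

definition coarse_structure :: "'x set \<Rightarrow> ('x \<times> 'x) set set \<Rightarrow> bool" where
  "coarse_structure X C \<longleftrightarrow>
     (\<forall>U\<in>C. U \<subseteq> X \<times> X) \<and> Id_on X \<in> C \<and>
     (\<forall>U\<in>C. \<forall>V. V \<subseteq> U \<longrightarrow> V \<in> C) \<and>
     (\<forall>U\<in>C. \<forall>V\<in>C. U \<union> V \<in> C) \<and>
     (\<forall>U\<in>C. U\<inverse> \<in> C) \<and>
     (\<forall>U\<in>C. \<forall>V\<in>C. U O V \<in> C)"

definition bornology :: "'x set \<Rightarrow> 'x set set \<Rightarrow> bool" where
  "bornology X B \<longleftrightarrow>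
     (\<forall>A\<in>B. A \<subseteq> X) \<and> \<Union>B = X \<and>
     (\<forall>A\<in>B. \<forall>A'. A' \<subseteq> A \<longrightarrow> A' \<in> B) \<and>
     (\<forall>A\<in>B. \<forall>A'\<in>B. A \<union> A' \<in> B)"

definition ent_image :: "('x \<times> 'x) set \<Rightarrow> 'x set \<Rightarrow> 'x set" where
  "ent_image U A = {x. \<exists>a\<in>A. (x, a) \<in> U}"

definition compatible :: "('x \<times> 'x) set set \<Rightarrow> 'x set set \<Rightarrow> bool" where
  "compatible C B \<longleftrightarrow> (\<forall>U\<in>C. \<forall>A\<in>B. ent_image U A \<in> B)"

definition inv_rel :: "('g, 'm) monoid_scheme \<Rightarrow> ('g \<Rightarrow> 'x \<Rightarrow> 'x) \<Rightarrow> ('x \<times> 'x) set \<Rightarrow> bool" where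
  "inv_rel G \<phi> U \<longleftrightarrow> (\<forall>g\<in>carrier G. \<forall>(x, y)\<in>U. (\<phi> g x, \<phi> g y) \<in> U)"

definition inv_set :: "('g, 'm) monoid_scheme \<Rightarrow> ('g \<Rightarrow> 'x \<Rightarrow> 'x) \<Rightarrow> 'x set \<Rightarrow> bool" where
  "inv_set G \<phi> A \<longleftrightarrow> (\<forall>g\<in>carrier G. \<forall>x\<in>A. \<phi> g x \<in> A)"

definition GBornCoarse ::
  "('g, 'm) monoid_scheme \<Rightarrow> 'x set \<Rightarrow> ('g \<Rightarrow> 'x \<Rightarrow> 'x) \<Rightarrow> ('x \<times> 'x) set set \<Rightarrow> 'x set set \<Rightarrow> bool" where
  "GBornCoarse G X \<phi> C B \<longleftrightarrow>
     group G \<and> group_action G X \<phi> \<and>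
     coarse_structure X C \<and> (\<forall>U\<in>C. \<exists>V\<in>C. U \<subseteq> V \<and> inv_rel G \<phi> V) \<and>
     bornology X B \<and> (\<forall>g\<in>carrier G. \<forall>A\<in>B. \<phi> g ` A \<in> B) \<and>
     compatible C B"

definition controlled :: "'x set \<Rightarrow> ('x \<times> 'x) set set \<Rightarrow> ('y \<times> 'y) set set \<Rightarrow> ('x \<Rightarrow> 'y) \<Rightarrow> bool" where
  "controlled X CX CY f \<longleftrightarrow> (\<forall>U\<in>CX. (\<lambda>(a, b). (f a, f b)) ` U \<in> CY)"

definition proper_map :: "'x set \<Rightarrow> 'x set set \<Rightarrow> 'y set set \<Rightarrow> ('x \<Rightarrow> 'y) \<Rightarrow> bool" where
  "proper_map X BX BY f \<longleftrightarrow> (\<forall>A\<in>BY. f -` A \<inter> X \<in> BX)"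

definition equivariant ::
  "('g, 'm) monoid_scheme \<Rightarrow> 'x set \<Rightarrow> ('g \<Rightarrow> 'x \<Rightarrow> 'x) \<Rightarrow> ('g \<Rightarrow> 'y \<Rightarrow> 'y) \<Rightarrow> ('x \<Rightarrow> 'y) \<Rightarrow> bool" where
  "equivariant G X \<phi> \<psi> f \<longleftrightarrow> (\<forall>g\<in>carrier G. \<forall>x\<in>X. f (\<phi> g x) = \<psi> g (f x))"

definition GBC_morphism where
  "GBC_morphism G X \<phi> CX BX Y \<psi> CY BY f \<longleftrightarrow>
     f \<in> X \<rightarrow> Y \<and> equivariant G X \<phi> \<psi> f \<and> controlled X CX CY f \<and> proper_map X BX BY f"

definition close :: "'x set \<Rightarrow> ('y \<times> 'y) set set \<Rightarrow> ('x \<Rightarrow> 'y) \<Rightarrow> ('x \<Rightarrow> 'y) \<Rightarrow> bool" where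
  "close X CY f0 f1 \<longleftrightarrow> (\<lambda>x. (f0 x, f1 x)) ` X \<in> CY"

text \<open>Weak coarse equivalence: forgetting the G-action, f has a controlled proper
  inverse up to closeness.\<close>
definition weak_coarse_equivalence where
  "weak_coarse_equivalence X CX BX Y CY BY f \<longleftrightarrow>
     (\<exists>g. g \<in> Y \<rightarrow> X \<and> controlled Y CY CX g \<and> proper_map Y BY BX g \<and>
          close Y CY (f \<circ> g) id \<and> close X CX (g \<circ> f) id)"

definition stab :: "('g, 'm) monoid_scheme \<Rightarrow> ('g \<Rightarrow> 'x \<Rightarrow> 'x) \<Rightarrow> 'x \<Rightarrow> 'g set" where
  "stab G \<phi> x = {g \<in> carrier G. \<phi> g x = x}"

definition LF :: "('g, 'm) monoid_scheme \<Rightarrow> 'x set \<Rightarrow> ('g \<Rightarrow> 'x \<Rightarrow> 'x) \<Rightarrow> 'x set set \<Rightarrow> 'x set set" where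
  "LF G X \<phi> B = {L. L \<subseteq> X \<and> inv_set G \<phi> L \<and> (\<forall>A\<in>B. finite (L \<inter> A))}"

text \<open>Multivalued maps s : L -> H as relations s \<subseteq> L \<times> H.\<close>
definition multivalued_map :: "'x set \<Rightarrow> 'y set \<Rightarrow> ('x \<times> 'y) set \<Rightarrow> bool" where
  "multivalued_map L H s \<longleftrightarrow> s \<subseteq> L \<times> H \<and> fst ` s = L"

definition mv_surjective :: "'y set \<Rightarrow> ('x \<times> 'y) set \<Rightarrow> bool" where
  "mv_surjective H s \<longleftrightarrow> snd ` s = H"

text \<open>Proper: q : L~ -> L and s~ : L~ -> H have finite fibres, where L~ is the disjoint
  union of the L_h, i.e. (in bijection with) s itself.\<close>
definition mv_proper :: "('x \<times> 'y) set \<Rightarrow> bool" where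
  "mv_proper s \<longleftrightarrow> (\<forall>l. finite {h. (l, h) \<in> s}) \<and> (\<forall>h. finite {l. (l, h) \<in> s})"

definition mv_equivariant ::
  "('g, 'm) monoid_scheme \<Rightarrow> ('g \<Rightarrow> 'x \<Rightarrow> 'x) \<Rightarrow> ('g \<Rightarrow> 'y \<Rightarrow> 'y) \<Rightarrow> ('x \<times> 'y) set \<Rightarrow> bool" where
  "mv_equivariant G \<phi> \<psi> s \<longleftrightarrow> (\<forall>g\<in>carrier G. \<forall>(l, h)\<in>s. (\<phi> g l, \<psi> g h) \<in> s)"

definition shadow where
  "shadow G \<phi> \<psi> CY f L H \<longleftrightarrow>
     (\<exists>s. multivalued_map L H s \<and> mv_surjective H s \<and> mv_proper s \<and>
          mv_equivariant G \<phi> \<psi> s \<and> (\<lambda>(l, h). (f l, h)) ` s \<in> CY)"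

definition LF_almost_surjective where
  "LF_almost_surjective G X \<phi> BX Y \<psi> CY BY f \<longleftrightarrow>
     (\<forall>H\<in>LF G Y \<psi> BY. \<exists>L\<in>LF G X \<phi> BX. shadow G \<phi> \<psi> CY f L H)"

end

theory Submission
  imports Defs
begin

lemma (in group_action) orbit_eq:
  assumes "x \<in> E" "z \<in> orbit G \<phi> x"
  shows "orbit G \<phi> z = orbit G \<phi> x"
proof -
  have zE: "z \<in> E" using assms by (auto simp: orbit_def intro: element_image)
  show ?thesis
  proof
    show "orbit G \<phi> z \<subseteq> orbit G \<phi> x"
    proof
      fix w assume w: "w \<in> orbit G \<phi> z"
      then have "w \<in> E" using zE by (auto simp: orbit_def intro: element_image)
      then show "w \<in> orbit G \<phi> x" using orbit_trans[OF assms(1) zE _ assms(2) w] by blast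
    qed
  next
    show "orbit G \<phi> x \<subseteq> orbit G \<phi> z"
    proof
      fix w assume w: "w \<in> orbit G \<phi> x"
      then have wE: "w \<in> E" using assms(1) by (auto simp: orbit_def intro: element_image)
      have "x \<in> orbit G \<phi> z" using orbit_sym[OF assms(1) zE assms(2)] .
      then show "w \<in> orbit G \<phi> z" using orbit_trans[OF zE assms(1) wE _ w] by blast
    qed
  qed
qed

lemma (in group_action) orbit_subset_inv:
  assumes "inv_set G \<phi> H" "y \<in> H"
  shows "orbit G \<phi> y \<subseteq> H"
  using assms by (auto simp: orbit_def inv_set_def)

theorem lemma6p11:
  fixes G :: "('g, 'm) monoid_scheme"
    and X :: "'x set" and \<phi> :: "'g \<Rightarrow> 'x \<Rightarrow> 'x" and CX :: "('x \<times> 'x) set set" and BX :: "'x set set"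
    and Y :: "'y set" and \<psi> :: "'g \<Rightarrow> 'y \<Rightarrow> 'y" and CY :: "('y \<times> 'y) set set" and BY :: "'y set set"
    and f :: "'x \<Rightarrow> 'y"
  assumes "GBornCoarse G X \<phi> CX BX"
    and "GBornCoarse G Y \<psi> CY BY"
    and "GBC_morphism G X \<phi> CX BX Y \<psi> CY BY f"
    and "weak_coarse_equivalence X CX BX Y CY BY f"
    and "\<exists>U\<in>CY. \<forall>y\<in>Y. \<exists>x\<in>X. f x \<in> ent_image U {y} \<and> stab G \<phi> x \<subseteq> stab G \<psi> y \<and>
            finite {h <#\<^bsub>G\<^esub> stab G \<phi> x | h. h \<in> stab G \<psi> y}"
  shows "LF_almost_surjective G X \<phi> BX Y \<psi> CY BY f"
proof -
  have grp: "group G" and aX: "group_action G X \<phi>" and csX: "coarse_structure X CX"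
    and bX: "bornology X BX" and cmpX: "compatible CX BX"
    using assms(1) unfolding GBornCoarse_def by auto
  have aY: "group_action G Y \<psi>" and csY: "coarse_structure Y CY"
    and bY: "bornology Y BY" and cmpY: "compatible CY BY"
    and invY: "\<forall>U\<in>CY. \<exists>V\<in>CY. U \<subseteq> V \<and> inv_rel G \<psi> V"
    using assms(2) unfolding GBornCoarse_def by auto
  have fXY: "f \<in> X \<rightarrow> Y" and feq: "equivariant G X \<phi> \<psi> f"
    using assms(3) unfolding GBC_morphism_def by auto
  interpret group G by (rule grp)
  interpret X: group_action G X \<phi> by (rule aX)
  interpret Y: group_action G Y \<psi> by (rule aY)
  obtain k where kYX: "k \<in> Y \<rightarrow> X" and kprop: "proper_map Y BY BX k"
    and kclose: "close X CX (k \<circ> f) id"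
    using assms(4) unfolding weak_coarse_equivalence_def by blast
  obtain U where UC: "U \<in> CY" and Uprop: "\<forall>y\<in>Y. \<exists>x\<in>X. f x \<in> ent_image U {y} \<and> stab G \<phi> x \<subseteq> stab G \<psi> y \<and>
            finite {h <#\<^bsub>G\<^esub> stab G \<phi> x | h. h \<in> stab G \<psi> y}"
    using assms(5) by blast
  obtain V where VC: "V \<in> CY" and UV: "U \<subseteq> V" and Vinv: "inv_rel G \<psi> V"
    using invY UC by blast
  have "\<forall>y\<in>Y. \<exists>x. x \<in> X \<and> (f x, y) \<in> U \<and> stab G \<phi> x \<subseteq> stab G \<psi> y \<and>
            finite {h <#\<^bsub>G\<^esub> stab G \<phi> x | h. h \<in> stab G \<psi> y}"
    using Uprop unfolding ent_image_def by blast
  from bchoice[OF this] obtain c where c0: "\<forall>y\<in>Y. c y \<in> X \<and> (f (c y), y) \<in> U \<and> stab G \<phi> (c y) \<subseteq> stab G \<psi> y \<and>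
            finite {h <#\<^bsub>G\<^esub> stab G \<phi> (c y) | h. h \<in> stab G \<psi> y}" by blast
  have c: "\<And>y. y \<in> Y \<Longrightarrow> c y \<in> X \<and> (f (c y), y) \<in> U \<and> stab G \<phi> (c y) \<subseteq> stab G \<psi> y \<and>
            finite {h <#\<^bsub>G\<^esub> stab G \<phi> (c y) | h. h \<in> stab G \<psi> y}"
    using c0 by blast
  have Vi: "V\<inverse> \<in> CY" using VC csY unfolding coarse_structure_def by blast
  have sub_CY: "\<And>W. W \<subseteq> V \<Longrightarrow> W \<in> CY" using VC csY unfolding coarse_structure_def by blast
  have sub_BY: "\<And>A A'. A \<in> BY \<Longrightarrow> A' \<subseteq> A \<Longrightarrow> A' \<in> BY" using bY unfolding bornology_def by blast
  have sub_BX: "\<And>A A'. A \<in> BX \<Longrightarrow> A' \<subseteq> A \<Longrightarrow> A' \<in> BX" using bX unfolding bornology_def by blast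
  have BXsub: "\<And>A. A \<in> BX \<Longrightarrow> A \<subseteq> X" using bX unfolding bornology_def by blast
  have pt_BY: "\<And>y. y \<in> Y \<Longrightarrow> {y} \<in> BY"
  proof -
    fix y assume "y \<in> Y"
    then obtain A where "A \<in> BY" "y \<in> A" using bY unfolding bornology_def by blast
    then show "{y} \<in> BY" using sub_BY by blast
  qed
  have img_BY: "\<And>A. A \<in> BX \<Longrightarrow> f ` A \<in> BY"
  proof -
    fix A assume A: "A \<in> BX"
    define W where "W = (\<lambda>x. ((k \<circ> f) x, id x)) ` X"
    have WC: "W \<in> CX" using kclose unfolding close_def W_def .
    have EA: "ent_image W A \<in> BX" using cmpX WC A unfolding compatible_def by blast
    have "k -` ent_image W A \<inter> Y \<in> BY" using kprop EA unfolding proper_map_def by blast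
    moreover have "f ` A \<subseteq> k -` ent_image W A \<inter> Y"
    proof
      fix y assume "y \<in> f ` A"
      then obtain a where a: "a \<in> A" "y = f a" by blast
      have aX': "a \<in> X" using BXsub A a by blast
      have "(k (f a), a) \<in> W" using aX' unfolding W_def by force
      then show "y \<in> k -` ent_image W A \<inter> Y" using a aX' fXY unfolding ent_image_def by blast
    qed
    ultimately show "f ` A \<in> BY" using sub_BY by blast
  qed
  show ?thesis unfolding LF_almost_surjective_def
  proof
    fix H assume HLF: "H \<in> LF G Y \<psi> BY"
    have HY: "H \<subseteq> Y" and Hinv: "inv_set G \<psi> H" and Hfin: "\<And>A. A \<in> BY \<Longrightarrow> finite (H \<inter> A)"
      using HLF unfolding LF_def by auto
    define rep where "rep = (\<lambda>y. SOME z. z \<in> orbit G \<psi> y)"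
    have rep_orb: "\<And>y. y \<in> Y \<Longrightarrow> rep y \<in> orbit G \<psi> y"
      unfolding rep_def by (rule someI_ex) (use Y.orbit_refl in blast)
    have rep_H: "\<And>y. y \<in> H \<Longrightarrow> rep y \<in> H"
      using rep_orb HY Y.orbit_subset_inv[OF Hinv] by blast
    define s where "s = {(\<phi> g (c (rep y)), \<psi> g (rep y)) | y g. y \<in> H \<and> g \<in> carrier G}"
    define L where "L = fst ` s"
    have repY: "\<And>y. y \<in> H \<Longrightarrow> rep y \<in> Y" using rep_H HY by blast
    have cX: "\<And>y. y \<in> H \<Longrightarrow> c (rep y) \<in> X" using c repY by blast
    have sH: "\<And>l h. (l, h) \<in> s \<Longrightarrow> h \<in> H"
      using rep_H Hinv unfolding s_def inv_set_def by auto
    have sX: "\<And>l h. (l, h) \<in> s \<Longrightarrow> l \<in> X"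
      unfolding s_def using cX X.element_image by blast
    have sV: "\<And>l h. (l, h) \<in> s \<Longrightarrow> (f l, h) \<in> V"
    proof -
      fix l h assume "(l, h) \<in> s"
      then obtain y g where y: "y \<in> H" "g \<in> carrier G" "l = \<phi> g (c (rep y))" "h = \<psi> g (rep y)"
        unfolding s_def by blast
      have "(f (c (rep y)), rep y) \<in> V" using c repY[OF y(1)] UV by blast
      then have "(\<psi> g (f (c (rep y))), \<psi> g (rep y)) \<in> V" using Vinv y(2) unfolding inv_rel_def by blast
      moreover have "f l = \<psi> g (f (c (rep y)))" using feq y cX unfolding equivariant_def by blast
      ultimately show "(f l, h) \<in> V" using y by simp
    qed
    have fib_l: "\<And>l. l \<in> X \<Longrightarrow> finite {h. (l, h) \<in> s}"
    proof -
      fix l assume lX: "l \<in> X"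
      have "{f l} \<in> BY" using pt_BY fXY lX by blast
      then have "ent_image (V\<inverse>) {f l} \<in> BY" using cmpY Vi unfolding compatible_def by blast
      then have "finite (H \<inter> ent_image (V\<inverse>) {f l})" using Hfin by blast
      moreover have "{h. (l, h) \<in> s} \<subseteq> H \<inter> ent_image (V\<inverse>) {f l}"
        using sH sV unfolding ent_image_def by blast
      ultimately show "finite {h. (l, h) \<in> s}" by (rule finite_subset[rotated])
    qed
    have fib_h: "\<And>h. finite {l. (l, h) \<in> s}"
    proof -
      fix h
      show "finite {l. (l, h) \<in> s}"
      proof (cases "\<exists>l. (l, h) \<in> s")
        case False then show ?thesis by simp
      next
        case True
        then obtain l0 y0 g0 where y0: "y0 \<in> H" "g0 \<in> carrier G" "h = \<psi> g0 (rep y0)"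
          unfolding s_def by blast
        define r where "r = rep y0"
        define x where "x = c r"
        define S where "S = stab G \<phi> x"
        define Cos where "Cos = {k <#\<^bsub>G\<^esub> S | k. k \<in> stab G \<psi> r}"
        define F where "F = (\<lambda>C. \<phi> g0 (\<phi> (SOME k. k \<in> C) x))"
        have rY: "r \<in> Y" using repY y0 r_def by blast
        have xX: "x \<in> X" using c rY x_def by blast
        have hY: "h \<in> Y" using y0 rY Y.element_image r_def by blast
        have finCos: "finite Cos" using c rY unfolding Cos_def S_def x_def by blast
        have r_orb: "r \<in> orbit G \<psi> h"
        proof -
          have "\<psi> (inv\<^bsub>G\<^esub> g0) h = r" using Y.orbit_sym_aux y0 rY r_def by blast
          then show ?thesis unfolding orbit_def using y0 by force
        qed
        have "{l. (l, h) \<in> s} \<subseteq> F ` Cos"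
        proof
          fix l assume "l \<in> {l. (l, h) \<in> s}"
          then obtain y g where y: "y \<in> H" "g \<in> carrier G" "l = \<phi> g (c (rep y))" "h = \<psi> g (rep y)"
            unfolding s_def by blast
          have ryY: "rep y \<in> Y" using repY y by blast
          have yY: "y \<in> Y" using y HY by blast
          have y0Y: "y0 \<in> Y" using y0 HY by blast
          have ry_orb: "rep y \<in> orbit G \<psi> h"
          proof -
            have e: "\<psi> (inv\<^bsub>G\<^esub> g) h = rep y" using Y.orbit_sym_aux y ryY by blast
            have "inv\<^bsub>G\<^esub> g \<in> carrier G" using y by simp
            then show ?thesis unfolding orbit_def mem_Collect_eq
              by (intro exI[of _ "inv\<^bsub>G\<^esub> g"] conjI) (use e in auto)
          qed
          have "orbit G \<psi> y = orbit G \<psi> (rep y)" using Y.orbit_eq[OF yY rep_orb[OF yY]] by simp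
          also have "\<dots> = orbit G \<psi> h" using Y.orbit_eq[OF hY ry_orb] .
          also have "\<dots> = orbit G \<psi> r" using Y.orbit_eq[OF hY r_orb] by simp
          also have "\<dots> = orbit G \<psi> y0" using Y.orbit_eq[OF y0Y rep_orb[OF y0Y]] r_def by simp
          finally have "rep y = r" unfolding r_def rep_def by simp
          then have l: "l = \<phi> g x" and h: "h = \<psi> g r" using y x_def by auto
          define k where "k = inv\<^bsub>G\<^esub> g0 \<otimes>\<^bsub>G\<^esub> g"
          have kG: "k \<in> carrier G" using y y0 k_def by simp
          have "\<psi> k r = \<psi> (inv\<^bsub>G\<^esub> g0) (\<psi> g r)" using Y.composition_rule rY y y0 k_def by simp
          also have "\<dots> = r" using Y.orbit_sym_aux y0 rY r_def h by metis
          finally have kst: "k \<in> stab G \<psi> r" using kG unfolding stab_def by simp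
          have gk: "g = g0 \<otimes>\<^bsub>G\<^esub> k" using y y0 unfolding k_def by (simp add: m_assoc[symmetric])
          have l2: "l = \<phi> g0 (\<phi> k x)" using l gk X.composition_rule xX y0 kG by simp
          have "\<phi> \<one>\<^bsub>G\<^esub> x = x" using xX by (simp flip: X.id_eq_one)
          then have oneS: "\<one>\<^bsub>G\<^esub> \<in> S" unfolding S_def stab_def by simp
          have ex: "\<exists>k'. k' \<in> k <#\<^bsub>G\<^esub> S" using oneS unfolding l_coset_def by blast
          have "(SOME k'. k' \<in> k <#\<^bsub>G\<^esub> S) \<in> k <#\<^bsub>G\<^esub> S" using someI_ex[OF ex] .
          then obtain t where t: "t \<in> S" "(SOME k'. k' \<in> k <#\<^bsub>G\<^esub> S) = k \<otimes>\<^bsub>G\<^esub> t" unfolding l_coset_def by blast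
          have tG: "t \<in> carrier G" and tx: "\<phi> t x = x" using t unfolding S_def stab_def by auto
          have "\<phi> (SOME k'. k' \<in> k <#\<^bsub>G\<^esub> S) x = \<phi> k x" using t(2) X.composition_rule xX kG tG tx by simp
          then have "l = F (k <#\<^bsub>G\<^esub> S)" unfolding F_def using l2 by simp
          moreover have "k <#\<^bsub>G\<^esub> S \<in> Cos" unfolding Cos_def using kst by blast
          ultimately show "l \<in> F ` Cos" by blast
        qed
        then show ?thesis using finCos finite_surj by blast
      qed
    qed
    have Lfin: "\<And>A. A \<in> BX \<Longrightarrow> finite (L \<inter> A)"
    proof -
      fix A assume A: "A \<in> BX"
      define E where "E = H \<inter> ent_image (V\<inverse>) (f ` A)"
      have "ent_image (V\<inverse>) (f ` A) \<in> BY" using cmpY Vi img_BY[OF A] unfolding compatible_def by blast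
      then have Ef: "finite E" using Hfin unfolding E_def by blast
      have "L \<inter> A \<subseteq> (\<Union>h\<in>E. {l. (l, h) \<in> s})"
      proof
        fix l assume l: "l \<in> L \<inter> A"
        then obtain h where lh: "(l, h) \<in> s" unfolding L_def by force
        have "h \<in> E" unfolding E_def ent_image_def using sH[OF lh] sV[OF lh] l by blast
        then show "l \<in> (\<Union>h\<in>E. {l. (l, h) \<in> s})" using lh by blast
      qed
      moreover have "finite (\<Union>h\<in>E. {l. (l, h) \<in> s})" using Ef fib_h by blast
      ultimately show "finite (L \<inter> A)" by (rule finite_subset)
    qed
    have seq: "\<And>g l h. g \<in> carrier G \<Longrightarrow> (l, h) \<in> s \<Longrightarrow> (\<phi> g l, \<psi> g h) \<in> s"
    proof -
      fix g' l h assume g': "g' \<in> carrier G" and "(l, h) \<in> s"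
      then obtain y g where y: "y \<in> H" "g \<in> carrier G" "l = \<phi> g (c (rep y))" "h = \<psi> g (rep y)"
        unfolding s_def by blast
      have "\<phi> g' l = \<phi> (g' \<otimes>\<^bsub>G\<^esub> g) (c (rep y))" using X.composition_rule cX y g' by simp
      moreover have "\<psi> g' h = \<psi> (g' \<otimes>\<^bsub>G\<^esub> g) (rep y)" using Y.composition_rule repY y g' by simp
      ultimately show "(\<phi> g' l, \<psi> g' h) \<in> s" unfolding s_def using y g' by blast
    qed
    have snds: "snd ` s = H"
    proof
      show "snd ` s \<subseteq> H" using sH by force
    next
      show "H \<subseteq> snd ` s"
      proof
        fix h assume hH: "h \<in> H"
        then obtain g0 where g0: "g0 \<in> carrier G" "rep h = \<psi> g0 h"
          using rep_orb HY unfolding orbit_def by blast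
        have hY: "h \<in> Y" using HY hH by blast
        have e: "\<psi> (inv\<^bsub>G\<^esub> g0) (rep h) = h" using Y.orbit_sym_aux[OF g0(1) hY g0(2)[symmetric]] .
        have "inv\<^bsub>G\<^esub> g0 \<in> carrier G" using g0 by simp
        then have "(\<phi> (inv\<^bsub>G\<^esub> g0) (c (rep h)), h) \<in> s" unfolding s_def mem_Collect_eq
          by (intro exI[of _ h] exI[of _ "inv\<^bsub>G\<^esub> g0"] conjI) (use e hH in auto)
        then show "h \<in> snd ` s" by force
      qed
    qed
    have "L \<in> LF G X \<phi> BX"
      unfolding LF_def inv_set_def L_def using sX seq Lfin[unfolded L_def] by force
    moreover have "shadow G \<phi> \<psi> CY f L H"
      unfolding shadow_def
    proof (intro exI conjI)
      show "multivalued_map L H s" unfolding multivalued_map_def L_def using sH by force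
      show "mv_surjective H s" unfolding mv_surjective_def using snds .
      show "mv_proper s" unfolding mv_proper_def
      proof (intro conjI allI)
        fix l show "finite {h. (l, h) \<in> s}"
        proof (cases "l \<in> X")
          case True then show ?thesis using fib_l by blast
        next
          case False then have "{h. (l, h) \<in> s} = {}" using sX by blast
          then show ?thesis by simp
        qed
      next
        fix h show "finite {l. (l, h) \<in> s}" using fib_h .
      qed
      show "mv_equivariant G \<phi> \<psi> s" unfolding mv_equivariant_def using seq by blast
      have "(\<lambda>(l, h). (f l, h)) ` s \<subseteq> V" using sV by auto
      then show "(\<lambda>(l, h). (f l, h)) ` s \<in> CY" using sub_CY by blast
    qed
    ultimately show "\<exists>L\<in>LF G X \<phi> BX. shadow G \<phi> \<psi> CY f L H" by blast
  qed
qed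

end
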